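(* Let $S$ be a $\Gamma$-AG$^{**}$-groupoid. If $S\Gamma a=S$ holds for all $a\in S$, or if $a\Gamma S=S$ holds for all $a\in S$, then $S$ is intra-regular.
   Context: Let $S$ and $\Gamma$ be nonempty sets with a map $S\times\Gamma\times S\to S$, $(x,\gamma,y)\mapsto x\gamma y$. $S$ is a $\Gamma$-AG-groupoid if $(x\gamma y)\delta z=(z\gamma y)\delta x$ for all $x,y,z\in S$, $\gamma,\delta\in\Gamma$; it is a $\Gamma$-AG$^{**}$-groupoid if moreover $a\alpha(b\beta c)=b\alpha(a\beta c)$ for all $a,b,c\in S$, $\alpha,\beta\in\Gamma$. For subsets $A,B\subseteq S$, $A\Gamma B=\{a\gamma b: a\in A,\gamma\in\Gamma,b\in B\}$, and $S\Gamma a=S\Gamma\{a\}$, $a\Gamma S=\{a\}\Gamma S$. $S$ is intra-regular if for every $a\in S$ there exist $x,y\in S$ and $\beta,\gamma,\delta\in\Gamma$ with $a=(x\beta(a\delta a))\gamma y$. *)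

theory Defs
  imports Main
begin

text \<open>A Gamma-groupoid: carrier type 's (S), type 'g (Gamma), ternary operation
  op x gamma y = x gamma y.  Types are nonempty, matching nonempty S and Gamma.\<close>

definition gamma_AG_groupoid :: "('s \<Rightarrow> 'g \<Rightarrow> 's \<Rightarrow> 's) \<Rightarrow> bool" where
  "gamma_AG_groupoid op \<longleftrightarrow>
     (\<forall>x y z \<gamma> \<delta>. op (op x \<gamma> y) \<delta> z = op (op z \<gamma> y) \<delta> x)"

definition gamma_AG2_groupoid :: "('s \<Rightarrow> 'g \<Rightarrow> 's \<Rightarrow> 's) \<Rightarrow> bool" where
  "gamma_AG2_groupoid op \<longleftrightarrow> gamma_AG_groupoid op \<and>
     (\<forall>a b c \<alpha> \<beta>. op a \<alpha> (op b \<beta> c) = op b \<alpha> (op a \<beta> c))"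

definition gset_prod :: "('s \<Rightarrow> 'g \<Rightarrow> 's \<Rightarrow> 's) \<Rightarrow> 's set \<Rightarrow> 's set \<Rightarrow> 's set" where
  "gset_prod op A B = {op a \<gamma> b | a \<gamma> b. a \<in> A \<and> b \<in> B}"

definition intra_regular :: "('s \<Rightarrow> 'g \<Rightarrow> 's \<Rightarrow> 's) \<Rightarrow> bool" where
  "intra_regular op \<longleftrightarrow>
     (\<forall>a. \<exists>x y \<beta> \<gamma> \<delta>. a = op (op x \<beta> (op a \<delta> a)) \<gamma> y)"

end

theory Submission
  imports Defs
begin

theorem mainTheorem1:
  fixes op :: "'s \<Rightarrow> 'g \<Rightarrow> 's \<Rightarrow> 's"
  assumes "gamma_AG2_groupoid op"
    and "(\<forall>a. gset_prod op UNIV {a} = UNIV) \<or> (\<forall>a. gset_prod op {a} UNIV = UNIV)"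
  shows "intra_regular op"
proof -
  have LI: "\<And>x y z \<gamma> \<delta>. op (op x \<gamma> y) \<delta> z = op (op z \<gamma> y) \<delta> x"
    using assms(1) unfolding gamma_AG2_groupoid_def gamma_AG_groupoid_def by blast
  have AG: "\<And>a b c \<alpha> \<beta>. op a \<alpha> (op b \<beta> c) = op b \<alpha> (op a \<beta> c)"
    using assms(1) unfolding gamma_AG2_groupoid_def by blast
  show ?thesis unfolding intra_regular_def
  proof
    fix a :: 's
    define d :: 'g where "d = undefined"
    from assms(2) show "\<exists>x y \<beta> \<gamma> \<delta>. a = op (op x \<beta> (op a \<delta> a)) \<gamma> y"
    proof
      assume h: "\<forall>a. gset_prod op UNIV {a} = UNIV"
      have "a \<in> gset_prod op UNIV {op a d a}" using h by blast
      then obtain x b where e: "a = op x b (op a d a)" unfolding gset_prod_def by auto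
      have "a = op a b (op x d a)" using e AG by metis
      also have "\<dots> = op (op x b (op a d a)) b (op x d a)" using e by simp
      finally show ?thesis by blast
    next
      assume h: "\<forall>a. gset_prod op {a} UNIV = UNIV"
      have "a \<in> gset_prod op {op a d a} UNIV" using h by blast
      then obtain y b where e: "a = op (op a d a) b y" unfolding gset_prod_def by auto
      have "op a d a = op (op (op a d a) b y) d a" using e by (rule arg_cong)
      also have "\<dots> = op (op a b y) d (op a d a)" using LI by metis
      finally have e2: "op a d a = op (op a b y) d (op a d a)" .
      have "a = op (op (op a b y) d (op a d a)) b y" using e e2 by simp
      thus ?thesis by blast
    qed
  qed
qed

end
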